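(* Let $n$ be even and consider the problem BPAOAZ (defined in the context). The expected running time of $\text{EMPMO}_{\text{payoff}}$ applied to BPAOAZ is bounded by $O(n\log n)$.
   Context: BPAOAZ: for $\mathbf{x}=(x_1,\dots,x_n)\in\{0,1\}^n$ with $n$ even, party 1 has objectives $f_{11}(\mathbf{x})=\sum_{i=n/2+1}^{n}x_i$ and $f_{12}(\mathbf{x})=\sum_{i=1}^{n/2}x_i+\sum_{i=n/2+1}^{n}(1-x_i)$; party 2 has objectives $f_{21}(\mathbf{x})=\sum_{i=1}^{n/2}(1-x_i)+\sum_{i=n/2+1}^{n}x_i$ and $f_{22}(\mathbf{x})=\sum_{i=1}^{n/2}x_i$; all objectives are maximized. The common Pareto set (solutions Pareto optimal for both parties) is $\{1^n\}$. One-bit mutation flips one uniformly random bit. Multi-party payoff: for party $m\in\{1,2\}$ and solutions $\mathbf{x},\mathbf{x}'$, $\pi_m(\mathbf{x},\mathbf{x}')=1$ if $f_{mk}(\mathbf{x}')\ge f_{mk}(\mathbf{x})$ for all $k\in\{1,2\}$; $\pi_m(\mathbf{x},\mathbf{x}')=-1$ if (not the previous case and) $f_{mk}(\mathbf{x}')\le f_{mk}(\mathbf{x})$ for all $k$; and $0$ otherwise. The multi-party payoff is $\pi_{\mathbf{x},\mathbf{x}'}=\pi_1(\mathbf{x},\mathbf{x}')+\pi_2(\mathbf{x},\mathbf{x}')$. $\text{EMPMO}_{\text{payoff}}$: choose $\mathbf{x}$ uniformly from $\{0,1\}^n$, $P=\{\mathbf{x}\}$. Each iteration: pick $\mathbf{x}\in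 P$ uniformly at random, apply one-bit mutation to get $\mathbf{x}'$, and if $\pi_{\mathbf{x},\mathbf{x}'}>0$ set $P\leftarrow(P\setminus\{\mathbf{x}\})\cup\{\mathbf{x}'\}$. The running time is the number of fitness evaluations (mutations) until the common Pareto-optimal solution is included in the population for the first time. *)

theory Defs
  imports "HOL-Probability.Probability"
begin

text \<open>Solutions of length n are bool lists; index i (0-based) = bit x_{i+1}.
  First half: indices 0..<n div 2; second half: n div 2..<n.\<close>

definition cnt :: "nat set \<Rightarrow> (nat \<Rightarrow> bool) \<Rightarrow> nat" where
  "cnt I P = (\<Sum>i\<in>I. if P i then 1 else 0)"

text \<open>BPAOAZ objectives: bpaoaz n m k x = f_{mk}(x), all maximised.\<close>
definition bpaoaz :: "nat \<Rightarrow> nat \<Rightarrow> nat \<Rightarrow> bool list \<Rightarrow> nat" where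
  "bpaoaz n m k x =
    (if m = 1 \<and> k = 1 then cnt {n div 2..<n} (\<lambda>i. x ! i)
     else if m = 1 \<and> k = 2 then cnt {..<n div 2} (\<lambda>i. x ! i) + cnt {n div 2..<n} (\<lambda>i. \<not> x ! i)
     else if m = 2 \<and> k = 1 then cnt {..<n div 2} (\<lambda>i. \<not> x ! i) + cnt {n div 2..<n} (\<lambda>i. x ! i)
     else cnt {..<n div 2} (\<lambda>i. x ! i))"

definition party_payoff :: "nat \<Rightarrow> nat \<Rightarrow> bool list \<Rightarrow> bool list \<Rightarrow> int" where
  "party_payoff n m x x' =
    (if \<forall>k\<in>{1,2}. bpaoaz n m k x' \<ge> bpaoaz n m k x then 1
     else if \<forall>k\<in>{1,2}. bpaoaz n m k x' \<le> bpaoaz n m k x then -1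
     else 0)"

definition payoff :: "nat \<Rightarrow> bool list \<Rightarrow> bool list \<Rightarrow> int" where
  "payoff n x x' = party_payoff n 1 x x' + party_payoff n 2 x x'"

definition one_bit_mutation :: "nat \<Rightarrow> bool list \<Rightarrow> bool list pmf" where
  "one_bit_mutation n x = map_pmf (\<lambda>i. x[i := \<not> x ! i]) (pmf_of_set {..<n})"

text \<open>One iteration of EMPMO_payoff (one fitness evaluation).\<close>
definition empmo_step :: "nat \<Rightarrow> bool list set \<Rightarrow> bool list set pmf" where
  "empmo_step n P =
    do { x \<leftarrow> pmf_of_set P;
         x' \<leftarrow> one_bit_mutation n x;
         return_pmf (if payoff n x x' > 0 then insert x' (P - {x}) else P) }"

definition target :: "nat \<Rightarrow> bool list" where
  "target n = replicate n True"

definition stopped_step :: "nat \<Rightarrow> bool list set \<Rightarrow> bool list set pmf" where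
  "stopped_step n P = (if target n \<in> P then return_pmf P else empmo_step n P)"

fun pop_dist :: "nat \<Rightarrow> nat \<Rightarrow> bool list set pmf" where
  "pop_dist n 0 = map_pmf (\<lambda>x. {x}) (pmf_of_set {x. length x = n})"
| "pop_dist n (Suc t) = pop_dist n t \<bind> stopped_step n"

text \<open>Expected running time E[T] = sum over t of Pr[T > t], where T > t iff
  1^n is not in the population after t iterations.\<close>
definition expected_runtime :: "nat \<Rightarrow> ennreal" where
  "expected_runtime n = (\<Sum>t. ennreal (measure_pmf.prob (pop_dist n t) {P. target n \<notin> P}))"

end

theory Submission
  imports Defs "HOL-Analysis.Harmonic_Numbers"
begin

definition zc :: "bool list \<Rightarrow> nat" where
  "zc x = cnt {..<length x} (\<lambda>j. \<not> x ! j)"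

definition pot :: "nat \<Rightarrow> bool list set \<Rightarrow> real" where
  "pot n P = (\<Sum>x\<in>P. real n * harm (zc x))"

lemma cnt_upd_in:
  assumes "finite I" "i \<in> I"
  shows "cnt I (\<lambda>j. Q (x[i:=v] ! j)) + (if Q (x!i) then 1 else 0)
       = cnt I (\<lambda>j. Q (x ! j)) + (if Q (if i < length x then v else x!i) then 1 else 0)"
proof -
  have e: "(\<Sum>j\<in>I-{i}. if Q (x[i:=v] ! j) then 1 else (0::nat)) = (\<Sum>j\<in>I-{i}. if Q (x ! j) then 1 else 0)"
    by (rule sum.cong) auto
  show ?thesis
    unfolding cnt_def
    using assms e
    by (cases "i < length x") (simp_all add: sum.remove[OF assms] nth_list_update list_update_beyond)
qed

lemma cnt_upd_out:
  assumes "i \<notin> I"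
  shows "cnt I (\<lambda>j. Q (x[i:=v] ! j)) = cnt I (\<lambda>j. Q (x ! j))"
  unfolding cnt_def using assms by (intro sum.cong refl) (metis nth_list_update_neq)

lemma payoff_flip:
  assumes "length x = n" "i < n"
  shows "(payoff n x (x[i:=\<not> x!i]) > 0) = (\<not> x!i)"
proof (cases "i < n div 2")
  case True
  have e1: "cnt {..<n div 2} (\<lambda>j. x[i:=\<not> x!i] ! j) + (if x!i then 1 else 0)
       = cnt {..<n div 2} (\<lambda>j. x ! j) + (if \<not> x!i then 1 else 0)"
    using cnt_upd_in[of "{..<n div 2}" i "\<lambda>b. b" x "\<not> x!i"] True assms by simp
  have e2: "cnt {..<n div 2} (\<lambda>j. \<not> x[i:=\<not> x!i] ! j) + (if \<not> x!i then 1 else 0)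
       = cnt {..<n div 2} (\<lambda>j. \<not> x ! j) + (if x!i then 1 else 0)"
    using cnt_upd_in[of "{..<n div 2}" i "Not" x "\<not> x!i"] True assms by simp
  have e3: "cnt {n div 2..<n} (\<lambda>j. x[i:=\<not> x!i] ! j) = cnt {n div 2..<n} (\<lambda>j. x ! j)"
    using cnt_upd_out[of i "{n div 2..<n}" "\<lambda>b. b"] True by simp
  have e4: "cnt {n div 2..<n} (\<lambda>j. \<not> x[i:=\<not> x!i] ! j) = cnt {n div 2..<n} (\<lambda>j. \<not> x ! j)"
    using cnt_upd_out[of i "{n div 2..<n}" "Not"] True by simp
  show ?thesis
    using e1 e2 e3 e4
    by (cases "x!i") (auto simp: payoff_def party_payoff_def bpaoaz_def)
next
  case False
  have e1: "cnt {n div 2..<n} (\<lambda>j. x[i:=\<not> x!i] ! j) + (if x!i then 1 else 0)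
       = cnt {n div 2..<n} (\<lambda>j. x ! j) + (if \<not> x!i then 1 else 0)"
    using cnt_upd_in[of "{n div 2..<n}" i "\<lambda>b. b" x "\<not> x!i"] False assms by simp
  have e2: "cnt {n div 2..<n} (\<lambda>j. \<not> x[i:=\<not> x!i] ! j) + (if \<not> x!i then 1 else 0)
       = cnt {n div 2..<n} (\<lambda>j. \<not> x ! j) + (if x!i then 1 else 0)"
    using cnt_upd_in[of "{n div 2..<n}" i "Not" x "\<not> x!i"] False assms by simp
  have e3: "cnt {..<n div 2} (\<lambda>j. x[i:=\<not> x!i] ! j) = cnt {..<n div 2} (\<lambda>j. x ! j)"
    using cnt_upd_out[of i "{..<n div 2}" "\<lambda>b. b"] False by simp
  have e4: "cnt {..<n div 2} (\<lambda>j. \<not> x[i:=\<not> x!i] ! j) = cnt {..<n div 2} (\<lambda>j. \<not> x ! j)"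
    using cnt_upd_out[of i "{..<n div 2}" "Not"] False by simp
  show ?thesis
    using e1 e2 e3 e4
    by (cases "x!i") (auto simp: payoff_def party_payoff_def bpaoaz_def)
qed

lemma zc_flip:
  assumes "i < length x" "\<not> x!i"
  shows "zc (x[i:=True]) + 1 = zc x"
  using cnt_upd_in[of "{..<length x}" i Not x True] assms
  by (simp add: zc_def)

lemma zc_le: "zc x \<le> length x"
proof -
  have "zc x \<le> (\<Sum>j<length x. 1)"
    unfolding zc_def cnt_def by (rule sum_mono) auto
  then show ?thesis by simp
qed

lemma zc_zero:
  assumes "length x = n" "x \<noteq> target n"
  shows "zc x > 0"
proof (rule ccontr)
  assume "\<not> zc x > 0"
  then have "(\<Sum>j<length x. if \<not> x ! j then 1 else (0::nat)) = 0"
    by (simp add: zc_def cnt_def)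
  then have "\<forall>j<length x. x ! j" by (simp add: split: if_splits)
  then have "x = target n" using assms(1)
    by (simp add: target_def list_eq_iff_nth_eq)
  then show False using assms(2) by simp
qed

lemma zc_target: "zc (target n) = 0"
  by (simp add: zc_def cnt_def target_def)

lemma sum_if_count:
  "(\<Sum>i<n. if \<not> x ! i then a else b) = real n * b + (a - b) * real (cnt {..<n} (\<lambda>j. \<not> x ! j))"
proof -
  have "(\<Sum>i<n. if \<not> x ! i then a else b) = (\<Sum>i<n. b + (a - b) * (if \<not> x ! i then 1 else 0))"
    by (rule sum.cong) auto
  also have "\<dots> = real n * b + (a - b) * (\<Sum>i<n. (if \<not> x ! i then 1 else 0))"
    by (simp add: sum.distrib sum_distrib_left)
  also have "(\<Sum>i<n. (if \<not> x ! i then 1 else 0::real)) = real (cnt {..<n} (\<lambda>j. \<not> x ! j))"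
    unfolding cnt_def of_nat_sum by (rule sum.cong) auto
  finally show ?thesis .
qed

definition F :: "nat \<Rightarrow> bool list \<Rightarrow> nat \<Rightarrow> bool list set" where
  "F n x i = (if payoff n x (x[i := \<not> x ! i]) > 0 then {x[i := \<not> x ! i]} else {x})"

lemma step_form:
  assumes "x \<noteq> target n" "n > 0"
  shows "stopped_step n {x} = map_pmf (F n x) (pmf_of_set {..<n})"
proof -
  have e: "\<And>y. insert y ({x} - {x}) = {y}" by simp
  show ?thesis
  using assms
  apply (simp add: stopped_step_def empmo_step_def one_bit_mutation_def pmf_of_set_singleton
      bind_return_pmf map_pmf_def bind_assoc_pmf F_def)
  apply (rule bind_pmf_cong)
   apply (auto simp only: e)
  done
qed

lemma step_set:
  assumes "length x = n" "n > 0"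
  shows "set_pmf (stopped_step n {x}) \<subseteq> {{y} | y. length y = n}"
proof (cases "x = target n")
  case True
  then show ?thesis using assms by (auto simp: stopped_step_def)
next
  case False
  have "{..<n} \<noteq> {}" using assms by auto
  then show ?thesis using step_form[OF False assms(2)] assms
    by (auto simp: F_def)
qed

lemma pot_nonneg: "pot n P \<ge> 0"
  unfolding pot_def by (intro sum_nonneg mult_nonneg_nonneg harm_nonneg) auto

lemma pot_F:
  assumes "length x = n" "i < n"
  shows "pot n (F n x i) = (if \<not> x ! i then real n * harm (zc x - 1) else real n * harm (zc x))"
proof (cases "x ! i")
  case True
  then have "\<not> payoff n x (x[i := \<not> x ! i]) > 0" using payoff_flip[OF assms] by simp
  then show ?thesis using True by (simp add: F_def pot_def)
next
  case False
  then have "payoff n x (x[i := \<not> x ! i]) > 0" using payoff_flip[OF assms] by simp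
  moreover have "zc (x[i:=True]) = zc x - 1" using zc_flip[of i x] assms False by simp
  ultimately show ?thesis using False by (simp add: F_def pot_def)
qed

lemma real_step:
  assumes "n > 0" "k > 0" "k \<le> n"
  shows "1 + (real n * (real n * harm k) + (real n * harm (k - 1) - real n * harm k) * real k) / real n
         = real n * harm k"
proof -
  have h: "harm k = harm (k - 1) + inverse (real k)"
    using harm_Suc[of "k - 1"] assms by simp
  show ?thesis using assms unfolding h by (simp add: field_simps)
qed

lemma step_ineq:
  assumes "length x = n" "n > 0"
  shows "indicator {P. target n \<notin> P} {x} + (\<integral>\<^sup>+P. ennreal (pot n P) \<partial>stopped_step n {x})
         \<le> ennreal (pot n {x})"
proof (cases "x = target n")
  case True
  then show ?thesis by (simp add: stopped_step_def pot_def zc_target)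
next
  case False
  define k where "k = zc x"
  define S where "S = (\<Sum>i<n. pot n (F n x i))"
  have kpos: "k > 0" using zc_zero[OF assms(1) False] k_def by simp
  have kle: "k \<le> n" using zc_le[of x] assms k_def by simp
  have ne: "{..<n} \<noteq> {}" using assms by auto
  have Snn: "0 \<le> S / real n" unfolding S_def
    by (intro divide_nonneg_nonneg sum_nonneg pot_nonneg) simp
  have "(\<integral>\<^sup>+P. ennreal (pot n P) \<partial>stopped_step n {x})
      = (\<integral>\<^sup>+i. ennreal (pot n (F n x i)) \<partial>pmf_of_set {..<n})"
    by (simp add: step_form[OF False assms(2)])
  also have "\<dots> = (\<Sum>i<n. ennreal (pot n (F n x i))) / of_nat (card {..<n})"
    by (rule nn_integral_pmf_of_set[OF ne]) simp
  also have "\<dots> = ennreal (S / real n)"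
    unfolding S_def
    apply (subst sum_ennreal)
     apply (rule pot_nonneg)
    apply (simp only: card_lessThan ennreal_of_nat_eq_real_of_nat)
    apply (rule divide_ennreal)
     apply (rule sum_nonneg, rule pot_nonneg)
    using assms(2) apply simp
    done
  finally have I: "(\<integral>\<^sup>+P. ennreal (pot n P) \<partial>stopped_step n {x}) = ennreal (S / real n)" .
  have "S = (\<Sum>i<n. if \<not> x ! i then real n * harm (k - 1) else real n * harm k)"
    unfolding S_def using pot_F[OF assms(1)] k_def by (intro sum.cong) auto
  also have "\<dots> = real n * (real n * harm k) + (real n * harm (k - 1) - real n * harm k) * real k"
    unfolding sum_if_count k_def zc_def assms(1) ..
  finally have S: "1 + S / real n = real n * harm k"
    using real_step[OF assms(2) kpos kle] by simp
  have "indicator {P. target n \<notin> P} {x} + (\<integral>\<^sup>+P. ennreal (pot n P) \<partial>stopped_step n {x})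
     = 1 + ennreal (S / real n)"
    unfolding I using False by simp
  also have "\<dots> = ennreal (1 + S / real n)"
    using Snn by (simp add: ennreal_plus)
  also have "\<dots> = ennreal (pot n {x})"
    unfolding S by (simp add: pot_def k_def)
  finally show ?thesis by simp
qed

lemma pop_inv:
  assumes "n > 0"
  shows "P \<in> set_pmf (pop_dist n t) \<Longrightarrow> \<exists>y. P = {y} \<and> length y = n"
proof (induction t arbitrary: P)
  case 0
  have fin: "finite {x::bool list. length x = n}"
    using finite_lists_length_eq[of "UNIV :: bool set" n] by simp
  have ne: "{x::bool list. length x = n} \<noteq> {}"
    by (metis (mono_tags) empty_Collect_eq length_replicate)
  show ?case using 0 fin ne by auto
next
  case (Suc t)
  then obtain Q where Q: "Q \<in> set_pmf (pop_dist n t)" "P \<in> set_pmf (stopped_step n Q)"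
    by auto
  then obtain y where y: "Q = {y}" "length y = n" using Suc.IH by blast
  show ?case using step_set[OF y(2) assms] Q(2) y(1) by blast
qed

lemma one_step:
  assumes "n > 0"
  shows "ennreal (measure_pmf.prob (pop_dist n t) {P. target n \<notin> P})
     + (\<integral>\<^sup>+P. ennreal (pot n P) \<partial>pop_dist n (Suc t))
     \<le> (\<integral>\<^sup>+P. ennreal (pot n P) \<partial>pop_dist n t)"
proof -
  let ?D = "pop_dist n t"
  let ?A = "{P. target n \<notin> P}"
  have "ennreal (measure_pmf.prob ?D ?A) = (\<integral>\<^sup>+P. indicator ?A P \<partial>?D)"
    by (simp add: measure_pmf.emeasure_eq_measure[symmetric])
  moreover have "(\<integral>\<^sup>+P. ennreal (pot n P) \<partial>pop_dist n (Suc t))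
      = (\<integral>\<^sup>+Q. (\<integral>\<^sup>+P. ennreal (pot n P) \<partial>stopped_step n Q) \<partial>?D)"
    by simp
  ultimately have "ennreal (measure_pmf.prob ?D ?A) + (\<integral>\<^sup>+P. ennreal (pot n P) \<partial>pop_dist n (Suc t))
      = (\<integral>\<^sup>+Q. indicator ?A Q + (\<integral>\<^sup>+P. ennreal (pot n P) \<partial>stopped_step n Q) \<partial>?D)"
    by (simp add: nn_integral_add)
  also have "\<dots> \<le> (\<integral>\<^sup>+P. ennreal (pot n P) \<partial>?D)"
  proof (rule nn_integral_mono_AE)
    show "AE Q in measure_pmf ?D. indicator ?A Q + (\<integral>\<^sup>+P. ennreal (pot n P) \<partial>stopped_step n Q)
          \<le> ennreal (pot n Q)"
      unfolding AE_measure_pmf_iff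
    proof
      fix Q assume "Q \<in> set_pmf ?D"
      then obtain y where "Q = {y}" "length y = n" using pop_inv[OF assms] by blast
      then show "indicator ?A Q + (\<integral>\<^sup>+P. ennreal (pot n P) \<partial>stopped_step n Q) \<le> ennreal (pot n Q)"
        using step_ineq[of y n] assms by simp
    qed
  qed
  finally show ?thesis .
qed

lemma accum:
  assumes "n > 0"
  shows "(\<Sum>t<T. ennreal (measure_pmf.prob (pop_dist n t) {P. target n \<notin> P}))
     + (\<integral>\<^sup>+P. ennreal (pot n P) \<partial>pop_dist n T)
     \<le> (\<integral>\<^sup>+P. ennreal (pot n P) \<partial>pop_dist n 0)"
proof (induction T)
  case 0
  then show ?case by simp
next
  case (Suc T)
  have "(\<Sum>t<Suc T. ennreal (measure_pmf.prob (pop_dist n t) {P. target n \<notin> P}))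
     + (\<integral>\<^sup>+P. ennreal (pot n P) \<partial>pop_dist n (Suc T))
     = (\<Sum>t<T. ennreal (measure_pmf.prob (pop_dist n t) {P. target n \<notin> P}))
     + (ennreal (measure_pmf.prob (pop_dist n T) {P. target n \<notin> P})
     + (\<integral>\<^sup>+P. ennreal (pot n P) \<partial>pop_dist n (Suc T)))"
    by (simp add: add.assoc)
  also have "\<dots> \<le> (\<Sum>t<T. ennreal (measure_pmf.prob (pop_dist n t) {P. target n \<notin> P}))
     + (\<integral>\<^sup>+P. ennreal (pot n P) \<partial>pop_dist n T)"
    by (rule add_left_mono[OF one_step[OF assms]])
  also have "\<dots> \<le> (\<integral>\<^sup>+P. ennreal (pot n P) \<partial>pop_dist n 0)" by (rule Suc.IH)
  finally show ?case .
qed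

lemma init_bound:
  assumes "n > 0"
  shows "(\<integral>\<^sup>+P. ennreal (pot n P) \<partial>pop_dist n 0) \<le> ennreal (real n * harm n)"
proof -
  have fin: "finite {x::bool list. length x = n}"
    using finite_lists_length_eq[of "UNIV :: bool set" n] by simp
  have ne: "{x::bool list. length x = n} \<noteq> {}"
    by (metis (mono_tags) empty_Collect_eq length_replicate)
  have "(\<integral>\<^sup>+P. ennreal (pot n P) \<partial>pop_dist n 0)
      = (\<integral>\<^sup>+x. ennreal (real n * harm (zc x)) \<partial>pmf_of_set {x::bool list. length x = n})"
    by (simp add: pot_def)
  also have "\<dots> \<le> (\<integral>\<^sup>+x. ennreal (real n * harm n) \<partial>pmf_of_set {x::bool list. length x = n})"
  proof (rule nn_integral_mono_AE)
    show "AE x in measure_pmf (pmf_of_set {x::bool list. length x = n}).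
          ennreal (real n * harm (zc x)) \<le> ennreal (real n * harm n)"
      unfolding AE_measure_pmf_iff using fin ne
      by (auto intro!: ennreal_leI mult_left_mono harm_mono simp: zc_le[of _, simplified])
           (metis zc_le)
  qed
  also have "\<dots> = ennreal (real n * harm n)"
    by (simp add: measure_pmf.emeasure_space_1)
  finally show ?thesis .
qed

theorem theorem3:
  shows "\<exists>c::real. \<exists>N::nat. \<forall>n\<ge>N. even n \<longrightarrow>
           expected_runtime n \<le> ennreal (c * real n * ln (real n))"
proof (intro exI allI impI)
  fix n :: nat assume n3: "3 \<le> n"
  then have npos: "n > 0" by simp
  have "expected_runtime n \<le> ennreal (real n * harm n)"
    unfolding expected_runtime_def suminf_eq_SUP
  proof (rule SUP_least)
    fix T
    have "(\<Sum>t<T. ennreal (measure_pmf.prob (pop_dist n t) {P. target n \<notin> P}))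
       \<le> (\<Sum>t<T. ennreal (measure_pmf.prob (pop_dist n t) {P. target n \<notin> P}))
       + (\<integral>\<^sup>+P. ennreal (pot n P) \<partial>pop_dist n T)" by simp
    also have "\<dots> \<le> ennreal (real n * harm n)"
      using accum[OF npos, of T] init_bound[OF npos] by (rule order_trans)
    finally show "(\<Sum>t<T. ennreal (measure_pmf.prob (pop_dist n t) {P. target n \<notin> P}))
       \<le> ennreal (real n * harm n)" .
  qed
  also have "\<dots> \<le> ennreal (2 * real n * ln (real n))"
  proof (rule ennreal_leI)
    have h: "harm n - ln (real n) \<le> harm 1 - ln (real 1)"
      using euler_mascheroni_sequence_decreasing[of 1 n] n3 by simp
    have "harm (1::nat) = (1::real)" by (simp add: harm_def)
    then have h1: "harm n \<le> ln (real n) + 1" using h by simp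
    have "exp 1 \<le> real n" using exp_le n3 by linarith
    then have l1: "1 \<le> ln (real n)" using npos by (subst ln_ge_iff) auto
    have "real n * harm n \<le> real n * (2 * ln (real n))"
      using h1 l1 by (intro mult_left_mono) auto
    then show "real n * harm n \<le> 2 * real n * ln (real n)" by simp
  qed
  finally show "expected_runtime n \<le> ennreal (2 * real n * ln (real n))" .
qed

end
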